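(* Let $N=[n]$, let $v:2^N\to\mathbb{R}_+$ be any monotone valuation with $v(\emptyset)=0$, and let $X$ be a maximal decision map for $v$. Then there exists a pure Nash equilibrium $p\in\mathbb{R}^n_+$ of the pricing game defined by $v$ and $X$ with $X(p)=N$.
   Context: Pricing game: $N=[n]$ is a set of services, service $i$ controlled by seller $i$. A buyer has valuation $v:2^N\to\mathbb{R}_+$, monotone ($v(S)\le v(T)$ for $S\subseteq T$) with $v(\emptyset)=0$. For $p\in\mathbb{R}^n_+$, $p(S)=\sum_{j\in S}p_j$ and $D(v;p)=\arg\max_{S\subseteq N}(v(S)-p(S))$. A decision map is $X:\mathbb{R}^n_+\to 2^N$ with $X(p)\in D(v;p)$ for all $p$; it is maximal if for every $p$ there is no $S'\in D(v;p)$ with $X(p)\subsetneq S'$. Seller $i$ chooses a price $p_i\in\mathbb{R}_+$ and has utility $u_i(p)=p_i\cdot\mathbf{1}\{i\in X(p)\}$. A pure Nash equilibrium is a $p$ such that $u_i(p)\ge u_i(p_i',p_{-i})$ for all $i$ and all $p_i'\in\mathbb{R}_+$. *)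

theory Defs
  imports Complex_Main
begin

definition services :: "nat \<Rightarrow> nat set" where
  "services n = {0..<n}"

definition price_vectors :: "nat \<Rightarrow> (nat \<Rightarrow> real) set" where
  "price_vectors n = {p. (\<forall>i\<in>services n. 0 \<le> p i) \<and> (\<forall>i. i \<notin> services n \<longrightarrow> p i = 0)}"

definition valuation :: "nat \<Rightarrow> (nat set \<Rightarrow> real) \<Rightarrow> bool" where
  "valuation n v \<longleftrightarrow> v {} = 0 \<and> (\<forall>S. S \<subseteq> services n \<longrightarrow> 0 \<le> v S) \<and>
     (\<forall>S T. S \<subseteq> T \<and> T \<subseteq> services n \<longrightarrow> v S \<le> v T)"

definition price_of :: "(nat \<Rightarrow> real) \<Rightarrow> nat set \<Rightarrow> real" where
  "price_of p S = (\<Sum>j\<in>S. p j)"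

definition demand :: "nat \<Rightarrow> (nat set \<Rightarrow> real) \<Rightarrow> (nat \<Rightarrow> real) \<Rightarrow> nat set set" where
  "demand n v p = {S. S \<subseteq> services n \<and>
      (\<forall>T. T \<subseteq> services n \<longrightarrow> v T - price_of p T \<le> v S - price_of p S)}"

definition decision_map :: "nat \<Rightarrow> (nat set \<Rightarrow> real) \<Rightarrow> ((nat \<Rightarrow> real) \<Rightarrow> nat set) \<Rightarrow> bool" where
  "decision_map n v X \<longleftrightarrow> (\<forall>p\<in>price_vectors n. X p \<in> demand n v p)"

definition maximal_decision_map :: "nat \<Rightarrow> (nat set \<Rightarrow> real) \<Rightarrow> ((nat \<Rightarrow> real) \<Rightarrow> nat set) \<Rightarrow> bool" where
  "maximal_decision_map n v X \<longleftrightarrow> decision_map n v X \<and>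
     (\<forall>p\<in>price_vectors n. \<not> (\<exists>S'\<in>demand n v p. X p \<subset> S'))"

definition seller_utility :: "((nat \<Rightarrow> real) \<Rightarrow> nat set) \<Rightarrow> nat \<Rightarrow> (nat \<Rightarrow> real) \<Rightarrow> real" where
  "seller_utility X i p = (if i \<in> X p then p i else 0)"

definition pure_nash :: "nat \<Rightarrow> ((nat \<Rightarrow> real) \<Rightarrow> nat set) \<Rightarrow> (nat \<Rightarrow> real) \<Rightarrow> bool" where
  "pure_nash n X p \<longleftrightarrow> p \<in> price_vectors n \<and>
     (\<forall>i\<in>services n. \<forall>q. 0 \<le> q \<longrightarrow> seller_utility X i (p(i := q)) \<le> seller_utility X i p)"

end

theory Submission
  imports Defs
begin

lemma price_upd:
  assumes "finite T"
  shows "price_of (p(k:=t)) T = price_of p T + (if k \<in> T then t - p k else 0)"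
proof (cases "k \<in> T")
  case True
  have "price_of (p(k:=t)) T = t + (\<Sum>j\<in>T-{k}. (p(k:=t)) j)"
    unfolding price_of_def using sum.remove[OF assms True, of "p(k:=t)"] by (simp del: fun_upd_apply) simp
  also have "(\<Sum>j\<in>T-{k}. (p(k:=t)) j) = (\<Sum>j\<in>T-{k}. p j)"
    by (rule sum.cong) auto
  also have "price_of p T = p k + (\<Sum>j\<in>T-{k}. p j)"
    unfolding price_of_def using sum.remove[OF assms True, of p] by simp
  ultimately show ?thesis using True by (simp del: fun_upd_apply)
next
  case False
  have "price_of (p(k:=t)) T = price_of p T"
    unfolding price_of_def by (rule sum.cong) (use False in auto)
  then show ?thesis using False by simp
qed

lemma finite_sub: "T \<subseteq> services n \<Longrightarrow> finite T"
  unfolding services_def using finite_subset by blast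

lemma inv:
  assumes val: "valuation n v"
  shows "k \<le> n \<Longrightarrow> \<exists>p\<in>price_vectors n. (\<forall>j\<ge>k. p j = 0) \<and>
     (\<forall>T. T \<subseteq> services n \<longrightarrow> v T - price_of p T \<le> v (services n) - price_of p (services n)) \<and>
     (\<forall>i<k. \<exists>S. S \<subseteq> services n \<and> i \<notin> S \<and> v (services n) - price_of p (services n) \<le> v S - price_of p S)"
proof (induction k)
  case 0
  let ?p = "\<lambda>_::nat. 0::real"
  have pv: "?p \<in> price_vectors n" unfolding price_vectors_def by simp
  have "\<forall>T. T \<subseteq> services n \<longrightarrow> v T - price_of ?p T \<le> v (services n) - price_of ?p (services n)"
    using val unfolding valuation_def price_of_def by auto
  then show ?case using pv by auto
next
  case (Suc k)
  define N where "N = services n"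
  from Suc obtain p where pv: "p \<in> price_vectors n" and z: "\<forall>j\<ge>k. p j = 0"
    and dN: "\<forall>T. T \<subseteq> N \<longrightarrow> v T - price_of p T \<le> v N - price_of p N"
    and tight: "\<forall>i<k. \<exists>S. S \<subseteq> N \<and> i \<notin> S \<and> v N - price_of p N \<le> v S - price_of p S"
    unfolding N_def by auto
  define U where "U T = v T - price_of p T" for T
  define F where "F = {T. T \<subseteq> N \<and> k \<notin> T}"
  define t where "t = Min ((\<lambda>T. U N - U T) ` F)"
  have finF: "finite F" unfolding F_def N_def services_def
    by (rule finite_subset[of _ "Pow {0..<n}"]) auto
  have neF: "{} \<in> F" unfolding F_def by auto
  have tle: "t \<le> U N - U T" if "T \<in> F" for T
    unfolding t_def using finF that by (intro Min_le) auto
  have "t \<in> (\<lambda>T. U N - U T) ` F" unfolding t_def using finF neF by (intro Min_in) auto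
  then obtain T0 where T0: "T0 \<in> F" "t = U N - U T0" by auto
  have t0: "0 \<le> t" using T0 dN unfolding U_def F_def by auto
  have kN: "k \<in> N" using Suc.prems unfolding N_def services_def by auto
  define p' where "p' = p(k:=t)"
  have pk: "p k = 0" using z by auto
  have pr: "price_of p' T = price_of p T + (if k \<in> T then t else 0)" if "T \<subseteq> N" for T
    unfolding p'_def using price_upd[OF finite_sub[OF that[unfolded N_def]]] pk by simp
  have pv': "p' \<in> price_vectors n" using pv kN t0 unfolding p'_def price_vectors_def N_def by auto
  have z': "\<forall>j\<ge>Suc k. p' j = 0" using z unfolding p'_def by auto
  have UN': "v N - price_of p' N = U N - t" using pr[of N] kN unfolding U_def by auto
  have dN': "\<forall>T. T \<subseteq> N \<longrightarrow> v T - price_of p' T \<le> v N - price_of p' N"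
  proof (intro allI impI)
    fix T assume T: "T \<subseteq> N"
    show "v T - price_of p' T \<le> v N - price_of p' N"
    proof (cases "k \<in> T")
      case True then show ?thesis using pr[OF T] UN' dN T unfolding U_def by auto
    next
      case False
      then have "T \<in> F" using T unfolding F_def by auto
      then show ?thesis using tle[of T] pr[OF T] UN' False unfolding U_def by auto
    qed
  qed
  have low: "U S - t \<le> v S - price_of p' S" if "S \<subseteq> N" for S
    using pr[OF that] t0 unfolding U_def by auto
  have tight': "\<forall>i<Suc k. \<exists>S. S \<subseteq> N \<and> i \<notin> S \<and> v N - price_of p' N \<le> v S - price_of p' S"
  proof (intro allI impI)
    fix i assume i: "i < Suc k"
    show "\<exists>S. S \<subseteq> N \<and> i \<notin> S \<and> v N - price_of p' N \<le> v S - price_of p' S"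
    proof (cases "i < k")
      case True
      then obtain S where S: "S \<subseteq> N" "i \<notin> S" "v N - price_of p N \<le> v S - price_of p S"
        using tight by auto
      then show ?thesis using low[OF S(1)] UN' unfolding U_def by (intro exI[of _ S]) auto
    next
      case False
      then have "i = k" using i by auto
      moreover have "T0 \<subseteq> N" "k \<notin> T0" using T0 unfolding F_def by auto
      ultimately show ?thesis using pr[of T0] UN' T0(2) unfolding U_def
        by (intro exI[of _ T0]) auto
    qed
  qed
  show ?case using pv' z' dN' tight' unfolding N_def by blast
qed

theorem mainTheorem2:
  fixes n :: nat and v :: "nat set \<Rightarrow> real" and X :: "(nat \<Rightarrow> real) \<Rightarrow> nat set"
  assumes "valuation n v"
    and "maximal_decision_map n v X"
  shows "\<exists>p\<in>price_vectors n. pure_nash n X p \<and> X p = services n"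
proof -
  define N where "N = services n"
  obtain p where pv: "p \<in> price_vectors n"
    and dN: "\<forall>T. T \<subseteq> N \<longrightarrow> v T - price_of p T \<le> v N - price_of p N"
    and tight: "\<forall>i<n. \<exists>S. S \<subseteq> N \<and> i \<notin> S \<and> v N - price_of p N \<le> v S - price_of p S"
    using inv[OF assms(1), of n] unfolding N_def by auto
  have NdA: "N \<in> demand n v p" using dN unfolding demand_def N_def by auto
  have Xd: "X p \<in> demand n v p" using assms(2) pv unfolding maximal_decision_map_def decision_map_def by auto
  have XN: "X p = N"
  proof (rule ccontr)
    assume "X p \<noteq> N"
    moreover have "X p \<subseteq> N" using Xd unfolding demand_def N_def by auto
    ultimately have "X p \<subset> N" by auto
    then show False using assms(2) pv NdA unfolding maximal_decision_map_def by auto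
  qed
  have nash: "\<forall>i\<in>services n. \<forall>q. 0 \<le> q \<longrightarrow> seller_utility X i (p(i := q)) \<le> seller_utility X i p"
  proof (intro ballI allI impI)
    fix i q assume i: "i \<in> services n" and q: "0 \<le> (q::real)"
    have pi: "0 \<le> p i" using pv i unfolding price_vectors_def by auto
    have u: "seller_utility X i p = p i" using XN i unfolding seller_utility_def N_def by auto
    show "seller_utility X i (p(i := q)) \<le> seller_utility X i p"
    proof (cases "q \<le> p i")
      case True then show ?thesis using u pi unfolding seller_utility_def by auto
    next
      case False
      define p' where "p' = p(i:=q)"
      have pv': "p' \<in> price_vectors n" using pv i q unfolding p'_def price_vectors_def by auto
      have Xd': "X p' \<in> demand n v p'" using assms(2) pv' unfolding maximal_decision_map_def decision_map_def by auto
      have "i \<notin> X p'"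
      proof
        assume iX: "i \<in> X p'"
        have TN: "X p' \<subseteq> N" using Xd' unfolding demand_def N_def by auto
        obtain S where S: "S \<subseteq> N" "i \<notin> S" "v N - price_of p N \<le> v S - price_of p S"
          using tight i unfolding services_def by auto
        have prT: "price_of p' (X p') = price_of p (X p') + (q - p i)"
          unfolding p'_def using price_upd[OF finite_sub[OF TN[unfolded N_def]], of p i q] iX by (simp add: p'_def)
        have prS: "price_of p' S = price_of p S"
          unfolding p'_def using price_upd[OF finite_sub[OF S(1)[unfolded N_def]], of p i q] S(2) by simp
        have "v S - price_of p' S \<le> v (X p') - price_of p' (X p')"
          using Xd' S(1) unfolding demand_def N_def by auto
        then show False using prT prS dN TN S(3) False by auto
      qed
      then show ?thesis using u pi unfolding seller_utility_def p'_def by auto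
    qed
  qed
  show ?thesis using pv nash XN unfolding pure_nash_def N_def by auto
qed

end
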